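(* Let $g\ge1$ be an integer and let $a,b$ be integers with $0<a<b$. Define $\gamma_1=a$, $\gamma_2=b$, and for $r\ge3$ let $\gamma_r$ be the smallest integer greater than $\gamma_{r-1}$ such that $\{\gamma_1,\dots,\gamma_r\}$ is a $\mathcal D[g]$ set. Then there is an integer $n_0=n_0(a,b,g)$ such that $\gamma_n=2\gamma_{n-1}$ for all $n\ge n_0$.
   Context: For a positive integer $g$, a set $\mathcal S=\{a_1<a_2<\cdots\}\subset\mathbb N$ is a $\mathcal D[g]$ set if for every $m$ (for which $a_m$ exists) and every $t\in\mathbb Z$, $$\left|\left\{I\subseteq\{1,\dots,m\}:\ \sum_{i\in I}a_i=t\right\}\right|\le g.$$ *)

theory Defs
  imports Main
begin

text \<open>A set S of naturals, listed increasingly as a_1 < a_2 < ..., is a D[g] set if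
  for every m (with a_m existing) and every integer t, the number of subsets I of
  {1..m} with sum of a_i over I equal to t is at most g.  Since the a_i are distinct,
  subsets of indices {1..m} correspond bijectively to subsets of the prefix
  {x in S. x <= a_m}.\<close>
definition D_set :: "nat \<Rightarrow> nat set \<Rightarrow> bool" where
  "D_set g S \<longleftrightarrow>
     (\<forall>m\<in>S. \<forall>t::int. card {I. I \<subseteq> {x\<in>S. x \<le> m} \<and> (\<Sum>i\<in>I. int i) = t} \<le> g)"

text \<open>glist g a b k = [gamma_1, ..., gamma_(k+2)].\<close>
fun glist :: "nat \<Rightarrow> nat \<Rightarrow> nat \<Rightarrow> nat \<Rightarrow> nat list" where
  "glist g a b 0 = [a, b]"
| "glist g a b (Suc k) =
     (let L = glist g a b k
      in L @ [LEAST x. x > last L \<and> D_set g (insert x (set L))])"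

text \<open>gamma g a b r is gamma_r (1-based indexing, r >= 1).\<close>
definition gamma :: "nat \<Rightarrow> nat \<Rightarrow> nat \<Rightarrow> nat \<Rightarrow> nat" where
  "gamma g a b r = glist g a b (r - 2) ! (r - 1)"

end

theory Submission
  imports Defs Complex_Main
begin


definition rep :: "nat set \<Rightarrow> int \<Rightarrow> nat" where
  "rep S t = card {I. I \<subseteq> S \<and> (\<Sum>i\<in>I. int i) = t}"

lemma rep_finite: "finite S \<Longrightarrow> finite {I. I \<subseteq> S \<and> P I}"
  by (rule finite_subset[of _ "Pow S"]) auto

lemma rep_empty: "rep {} t = (if t = 0 then 1 else 0)"
proof -
  have "{I. I \<subseteq> ({}::nat set) \<and> (\<Sum>i\<in>I. int i) = t} = (if t = 0 then {{}} else {})" by auto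
  then show ?thesis unfolding rep_def by simp
qed

lemma rep_insert:
  assumes fin: "finite S" and y: "y \<notin> S"
  shows "rep (insert y S) t = rep S t + rep S (t - int y)"
proof -
  let ?A = "{I. I \<subseteq> S \<and> (\<Sum>i\<in>I. int i) = t}"
  let ?B = "{I. I \<subseteq> S \<and> (\<Sum>i\<in>I. int i) = t - int y}"
  have eq: "{I. I \<subseteq> insert y S \<and> (\<Sum>i\<in>I. int i) = t} = ?A \<union> insert y ` ?B"
  proof (rule set_eqI, rule iffI)
    fix I assume "I \<in> {I. I \<subseteq> insert y S \<and> (\<Sum>i\<in>I. int i) = t}"
    then have I: "I \<subseteq> insert y S" "(\<Sum>i\<in>I. int i) = t" by auto
    have finI: "finite I" using I(1) fin finite_subset by blast
    show "I \<in> ?A \<union> insert y ` ?B"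
    proof (cases "y \<in> I")
      case True
      have "I = insert y (I - {y})" using True by auto
      moreover have "I - {y} \<subseteq> S" using I(1) by auto
      moreover have "(\<Sum>i\<in>I - {y}. int i) = t - int y"
        using I(2) sum.remove[OF finI True, of int] by simp
      ultimately show ?thesis by blast
    next
      case False
      then have "I \<subseteq> S" using I(1) by auto
      then show ?thesis using I(2) by auto
    qed
  next
    fix I assume "I \<in> ?A \<union> insert y ` ?B"
    then show "I \<in> {I. I \<subseteq> insert y S \<and> (\<Sum>i\<in>I. int i) = t}"
    proof
      assume "I \<in> ?A" then show ?thesis by auto
    next
      assume "I \<in> insert y ` ?B"
      then obtain J where J: "J \<subseteq> S" "(\<Sum>i\<in>J. int i) = t - int y" "I = insert y J" by auto
      have "finite J" using J(1) fin finite_subset by blast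
      moreover have "y \<notin> J" using J(1) y by auto
      ultimately have "(\<Sum>i\<in>I. int i) = int y + (\<Sum>i\<in>J. int i)" using J(3) by simp
      then show ?thesis using J by auto
    qed
  qed
  have disj: "?A \<inter> insert y ` ?B = {}" using y by auto
  have inj: "inj_on (insert y) ?B"
  proof (rule inj_onI)
    fix I J assume "I \<in> ?B" "J \<in> ?B" "insert y I = insert y J"
    then have "y \<notin> I" "y \<notin> J" using y by auto
    then have "I = insert y I - {y}" "J = insert y J - {y}" by auto
    then show "I = J" using \<open>insert y I = insert y J\<close> by simp
  qed
  have "rep (insert y S) t = card (?A \<union> insert y ` ?B)" unfolding rep_def eq ..
  also have "\<dots> = card ?A + card (insert y ` ?B)"
    by (rule card_Un_disjoint) (use fin rep_finite disj in auto)
  also have "card (insert y ` ?B) = card ?B" using card_image[OF inj] .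
  finally show ?thesis unfolding rep_def by simp
qed


lemma rep_mono: "finite T \<Longrightarrow> S \<subseteq> T \<Longrightarrow> rep S t \<le> rep T t"
  unfolding rep_def by (rule card_mono) (auto intro: rep_finite)

lemma rep_neg: "t < 0 \<Longrightarrow> rep S t = 0"
proof -
  assume "t < 0"
  have "(\<Sum>i\<in>I. int i) \<noteq> t" for I :: "nat set"
  proof -
    have "(\<Sum>i\<in>I. int i) \<ge> 0" by (rule sum_nonneg) auto
    then show ?thesis using \<open>t < 0\<close> by linarith
  qed
  then have E: "{I. I \<subseteq> S \<and> (\<Sum>i\<in>I. int i) = t} = {}" by blast
  show ?thesis unfolding rep_def E by simp
qed

lemma rep_big: "finite S \<Longrightarrow> t > int (\<Sum>S) \<Longrightarrow> rep S t = 0"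
proof -
  assume fin: "finite S" and t: "t > int (\<Sum>S)"
  have "(\<Sum>i\<in>I. int i) \<noteq> t" if "I \<subseteq> S" for I
  proof -
    have "(\<Sum>i\<in>I. int i) \<le> (\<Sum>i\<in>S. int i)"
      by (intro sum_mono2 fin that) auto
    also have "\<dots> = int (\<Sum>S)" by simp
    finally show ?thesis using t by linarith
  qed
  then have E: "{I. I \<subseteq> S \<and> (\<Sum>i\<in>I. int i) = t} = {}" by blast
  show ?thesis unfolding rep_def E by simp
qed

lemma rep_mass:
  assumes fin: "finite S"
  shows "(\<Sum>t\<in>{0..int (\<Sum>S)}. rep S t) = 2 ^ card S"
proof -
  let ?P = "\<lambda>t. {I. I \<subseteq> S \<and> (\<Sum>i\<in>I. int i) = t}"
  have U: "Pow S = (\<Union>t\<in>{0..int (\<Sum>S)}. ?P t)"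
  proof (rule set_eqI, rule iffI)
    fix I assume "I \<in> Pow S"
    then have IS: "I \<subseteq> S" by auto
    have "(\<Sum>i\<in>I. int i) \<ge> 0" by (rule sum_nonneg) auto
    moreover have "(\<Sum>i\<in>I. int i) \<le> (\<Sum>i\<in>S. int i)" by (intro sum_mono2 fin IS) auto
    ultimately have "(\<Sum>i\<in>I. int i) \<in> {0..int (\<Sum>S)}" by simp
    then show "I \<in> (\<Union>t\<in>{0..int (\<Sum>S)}. ?P t)" using IS by blast
  next
    fix I assume "I \<in> (\<Union>t\<in>{0..int (\<Sum>S)}. ?P t)"
    then show "I \<in> Pow S" by blast
  qed
  have "2 ^ card S = card (Pow S)" using card_Pow[of S] fin by simp
  also have "\<dots> = card (\<Union>t\<in>{0..int (\<Sum>S)}. ?P t)" using U by simp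
  also have "\<dots> = (\<Sum>t\<in>{0..int (\<Sum>S)}. card (?P t))"
  proof (rule card_UN_disjoint)
    show "finite {0..int (\<Sum>S)}" by simp
    show "\<forall>i\<in>{0..int (\<Sum>S)}. finite (?P i)" by (intro ballI rep_finite[OF fin])
    show "\<forall>i\<in>{0..int (\<Sum>S)}. \<forall>j\<in>{0..int (\<Sum>S)}. i \<noteq> j \<longrightarrow> ?P i \<inter> ?P j = {}"
      by blast
  qed
  finally show ?thesis unfolding rep_def by simp
qed

lemma rep_bound:
  assumes fin: "finite S" and b: "\<And>t. rep S t \<le> g"
  shows "2 ^ card S \<le> g * (\<Sum>S + 1)"
proof -
  have "2 ^ card S = (\<Sum>t\<in>{0..int (\<Sum>S)}. rep S t)" using rep_mass[OF fin] by simp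
  also have "\<dots> \<le> (\<Sum>t\<in>{0..int (\<Sum>S)}. g)" by (rule sum_mono) (rule b)
  also have "\<dots> = g * card {0..int (\<Sum>S)}" by simp
  also have "card {0..int (\<Sum>S)} = \<Sum>S + 1"
  proof -
    define s where "s = \<Sum>S"
    have "card {0..int s} = s + 1" by simp
    then show ?thesis unfolding s_def .
  qed
  finally show ?thesis .
qed


definition adm :: "nat \<Rightarrow> nat set \<Rightarrow> nat \<Rightarrow> bool" where
  "adm g S y \<longleftrightarrow> (\<forall>t. rep S t + rep S (t - int y) \<le> g)"

lemma D_set_iff:
  assumes fin: "finite S" and ne: "S \<noteq> {}"
  shows "D_set g S \<longleftrightarrow> (\<forall>t. rep S t \<le> g)"
proof
  assume D: "D_set g S"
  have M: "Max S \<in> S" using fin ne by simp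
  have eq: "{x\<in>S. x \<le> Max S} = S" using fin by auto
  show "\<forall>t. rep S t \<le> g"
  proof
    fix t
    have "card {I. I \<subseteq> {x\<in>S. x \<le> Max S} \<and> (\<Sum>i\<in>I. int i) = t} \<le> g"
      using D M unfolding D_set_def by blast
    then show "rep S t \<le> g" unfolding rep_def eq .
  qed
next
  assume B: "\<forall>t. rep S t \<le> g"
  show "D_set g S" unfolding D_set_def
  proof (intro ballI allI)
    fix m t assume "m \<in> S"
    have "rep {x\<in>S. x \<le> m} t \<le> rep S t" by (rule rep_mono[OF fin]) auto
    also have "\<dots> \<le> g" using B by blast
    finally show "card {I. I \<subseteq> {x\<in>S. x \<le> m} \<and> (\<Sum>i\<in>I. int i) = t} \<le> g"
      unfolding rep_def .
  qed
qed

lemma D_set_insert_iff: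
  assumes fin: "finite S" and y: "y \<notin> S"
  shows "D_set g (insert y S) \<longleftrightarrow> adm g S y"
proof -
  have "D_set g (insert y S) \<longleftrightarrow> (\<forall>t. rep (insert y S) t \<le> g)"
    by (rule D_set_iff) (use fin in auto)
  also have "\<dots> \<longleftrightarrow> adm g S y" unfolding adm_def rep_insert[OF fin y] ..
  finally show ?thesis .
qed

lemma adm_shift:
  assumes fin: "finite S" and x: "x \<notin> S" and xy: "x \<le> y" and A: "adm g (insert x S) y"
  shows "adm g S (y - x)"
  unfolding adm_def
proof
  fix t
  have "rep (insert x S) (t + int x) + rep (insert x S) (t + int x - int y) \<le> g"
    using A unfolding adm_def by blast
  moreover have "rep (insert x S) (t + int x) \<ge> rep S t"
    unfolding rep_insert[OF fin x] by simp
  moreover have "rep (insert x S) (t + int x - int y) \<ge> rep S (t - int (y - x))"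
  proof -
    have e: "t + int x - int y = t - int (y - x)" using xy by simp
    show ?thesis unfolding e rep_insert[OF fin x] by (rule le_add1)
  qed
  ultimately show "rep S t + rep S (t - int (y - x)) \<le> g" by linarith
qed

lemma adm_big:
  assumes fin: "finite S" and B: "\<And>t. rep S t \<le> g" and y: "y > \<Sum>S"
  shows "adm g S y"
  unfolding adm_def
proof
  fix t
  show "rep S t + rep S (t - int y) \<le> g"
  proof (cases "t > int (\<Sum>S)")
    case True
    then have "rep S t = 0" by (rule rep_big[OF fin])
    then show ?thesis using B[of "t - int y"] by simp
  next
    case False
    then have "t - int y < 0" using y by linarith
    then have "rep S (t - int y) = 0" by (rule rep_neg)
    then show ?thesis using B[of t] by simp
  qed
qed

lemma D_set_base:
  assumes g: "g \<ge> 1" and a: "0 < a" and ab: "a < b"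
  shows "D_set g {a, b}"
proof -
  have "rep {a, b} t \<le> 1" for t
  proof -
    have "rep {a,b} t = rep {b} t + rep {b} (t - int a)"
      by (rule rep_insert) (use ab in auto)
    also have "rep {b} t = rep {} t + rep {} (t - int b)" by (rule rep_insert) auto
    also have "rep {b} (t - int a) = rep {} (t - int a) + rep {} (t - int a - int b)"
      by (rule rep_insert) auto
    finally show ?thesis using a ab unfolding rep_empty by auto
  qed
  then show ?thesis using g by (subst D_set_iff) (auto intro: order_trans)
qed




lemma glist_len: "length (glist g a b k) = Suc (Suc k)"
  by (induction k) (simp_all add: Let_def)

lemma glist_Suc: "glist g a b (Suc k) = glist g a b k @ [LEAST x. last (glist g a b k) < x \<and> D_set g (insert x (set (glist g a b k)))]"
  by (simp add: Let_def)

lemma mem_le_Sum: "finite (S::nat set) \<Longrightarrow> x \<in> S \<Longrightarrow> x \<le> \<Sum>S"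
  by (rule member_le_sum) auto

lemma greedy_exists:
  assumes fin: "finite S" and D: "D_set g S" and x: "x \<in> S"
  shows "x < \<Sum>S + 1 \<and> D_set g (insert (\<Sum>S + 1) S)"
proof -
  have "x \<le> \<Sum>S" using mem_le_Sum[OF fin x] .
  moreover have "\<Sum>S + 1 \<notin> S" using mem_le_Sum[OF fin] by fastforce
  moreover have "adm g S (\<Sum>S + 1)"
  proof (rule adm_big[OF fin])
    show "\<And>t. rep S t \<le> g" using D D_set_iff[OF fin] x by blast
  qed simp
  ultimately show ?thesis using D_set_insert_iff[OF fin] by auto
qed

definition X :: "nat \<Rightarrow> nat \<Rightarrow> nat \<Rightarrow> nat \<Rightarrow> nat" where
  "X g a b k = last (glist g a b k)"

definition SS :: "nat \<Rightarrow> nat \<Rightarrow> nat \<Rightarrow> nat \<Rightarrow> nat set" where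
  "SS g a b k = set (glist g a b k)"

lemma X_Suc: "X g a b (Suc k) = (LEAST x. X g a b k < x \<and> D_set g (insert x (SS g a b k)))"
  unfolding X_def SS_def by (simp add: Let_def)

lemma SS_Suc: "SS g a b (Suc k) = insert (X g a b (Suc k)) (SS g a b k)"
  unfolding X_def SS_def by (simp add: Let_def)

lemma SS_0: "SS g a b 0 = {a, b}" unfolding SS_def by simp
lemma X_0: "X g a b 0 = b" unfolding X_def by simp

lemma SS_fin: "finite (SS g a b k)" unfolding SS_def by simp

lemma inv:
  assumes g: "g \<ge> 1" and a: "0 < a" and ab: "a < b"
  shows "D_set g (SS g a b k) \<and> X g a b k \<in> SS g a b k \<and> (\<forall>y\<in>SS g a b k. y \<le> X g a b k)"
proof (induction k)
  case 0
  show ?case unfolding SS_0 X_0 using D_set_base[OF g a ab] ab by auto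
next
  case (Suc k)
  let ?S = "SS g a b k" and ?x = "X g a b k"
  let ?P = "\<lambda>y. ?x < y \<and> D_set g (insert y ?S)"
  have "?P (\<Sum>?S + 1)" using greedy_exists[OF SS_fin] Suc by blast
  then have P: "?P (X g a b (Suc k))" unfolding X_Suc by (rule LeastI)
  show ?case unfolding SS_Suc using P Suc by auto
qed




context
  fixes g a b :: nat
  assumes g: "g \<ge> 1" and a: "0 < a" and ab: "a < b"
begin

abbreviation "XX \<equiv> X g a b"
abbreviation "S \<equiv> SS g a b"
abbreviation "sig k \<equiv> \<Sum>(S k)"

lemma P_next: "XX k < XX (Suc k) \<and> D_set g (insert (XX (Suc k)) (S k))"
proof -
  let ?P = "\<lambda>y. XX k < y \<and> D_set g (insert y (S k))"
  have "?P (sig k + 1)" using greedy_exists[OF SS_fin] inv[OF g a ab] by blast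
  then show ?thesis unfolding X_Suc by (rule LeastI)
qed

lemma X_less: "XX k < XX (Suc k)" using P_next by blast

lemma X_notin: "XX (Suc k) \<notin> S k"
  using inv[OF g a ab, of k] X_less[of k] by fastforce

lemma X_adm: "adm g (S k) (XX (Suc k))"
  using P_next[of k] D_set_insert_iff[OF SS_fin X_notin] by blast

lemma X_min:
  assumes "XX k < y" "y < XX (Suc k)"
  shows "\<not> adm g (S k) y"
proof
  assume A: "adm g (S k) y"
  have "y \<notin> S k" using inv[OF g a ab, of k] assms(1) by fastforce
  then have "D_set g (insert y (S k))" using A D_set_insert_iff[OF SS_fin] by blast
  then have "XX (Suc k) \<le> y" unfolding X_Suc using assms(1) by (intro Least_le) simp
  then show False using assms(2) by simp
qed

lemma X_le: "XX (Suc k) \<le> sig k + 1"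
proof -
  have "XX k < sig k + 1 \<and> D_set g (insert (sig k + 1) (S k))"
    using greedy_exists[OF SS_fin] inv[OF g a ab] by blast
  then show ?thesis unfolding X_Suc by (intro Least_le) simp
qed

lemma rep_le: "rep (S k) t \<le> g"
proof -
  have "S k \<noteq> {}" using inv[OF g a ab, of k] by blast
  then show ?thesis using inv[OF g a ab, of k] D_set_iff[OF SS_fin] by blast
qed

lemma card_S: "card (S k) = k + 2"
proof (induction k)
  case 0 then show ?case using ab by (simp add: SS_0)
next
  case (Suc k) then show ?case using X_notin[of k] SS_fin[of g a b k] by (simp add: SS_Suc)
qed

lemma sig_Suc: "sig (Suc k) = sig k + XX (Suc k)"
  using X_notin[of k] SS_fin[of g a b k] by (simp add: SS_Suc)

lemma mass: "2 ^ (k + 2) \<le> g * (sig k + 1)"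
  using rep_bound[OF SS_fin rep_le] card_S by metis

lemma X_le_sig: "XX k \<le> sig k"
  using mem_le_Sum[OF SS_fin] inv[OF g a ab] by blast

end

lemma gamma_X: "n \<ge> 2 \<Longrightarrow> gamma g a b n = X g a b (n - 2)"
proof -
  assume n: "n \<ge> 2"
  have len: "length (glist g a b (n - 2)) = n" using glist_len[of g a b "n - 2"] n by simp
  then have "glist g a b (n - 2) \<noteq> []" using n by auto
  then have "last (glist g a b (n - 2)) = glist g a b (n - 2) ! (n - 1)"
    using last_conv_nth len by metis
  then show ?thesis unfolding gamma_def X_def by simp
qed




lemma eventually_const:
  fixes f :: "nat \<Rightarrow> nat"
  assumes mono: "\<And>n. n \<ge> N \<Longrightarrow> f (Suc n) \<le> f n"
  shows "\<exists>K\<ge>N. \<forall>n\<ge>K. f n = f K"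
proof -
  obtain K where K: "K \<ge> N" "\<And>n. n \<ge> N \<Longrightarrow> f K \<le> f n"
    using ex_has_least_nat[of "\<lambda>n. n \<ge> N" N f] by auto
  have le: "f (K + d) \<le> f K" for d
  proof (induction d)
    case 0 then show ?case by simp
  next
    case (Suc d)
    have "f (Suc (K + d)) \<le> f (K + d)" using mono K(1) by simp
    then show ?case using Suc by simp
  qed
  have "\<forall>n\<ge>K. f n = f K"
  proof (intro allI impI)
    fix n assume "n \<ge> K"
    then obtain d where "n = K + d" using le_Suc_ex by blast
    then show "f n = f K" using le[of d] K(2)[of n] \<open>n \<ge> K\<close> K(1) by simp
  qed
  then show ?thesis using K(1) by blast
qed

context
  fixes g a b :: nat
  assumes g: "g \<ge> 1" and a: "0 < a" and ab: "a < b"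
begin

abbreviation "Y \<equiv> X g a b"
abbreviation "T \<equiv> SS g a b"
abbreviation "sg k \<equiv> \<Sum>(T k)"

lemma step4:
  assumes big: "Y (Suc (Suc j)) > Y (Suc j) + Y j"
  shows "Y (Suc (Suc j)) \<ge> 2 * Y (Suc j)"
proof -
  have A: "adm g (insert (Y (Suc j)) (T j)) (Y (Suc (Suc j)))"
    using X_adm[OF g a ab, of "Suc j"] SS_Suc[of g a b j] by simp
  have le: "Y (Suc j) \<le> Y (Suc (Suc j))" using X_less[OF g a ab, of "Suc j"] by simp
  have A2: "adm g (T j) (Y (Suc (Suc j)) - Y (Suc j))"
    by (rule adm_shift[OF SS_fin X_notin[OF g a ab] le A])
  have "\<not> (Y (Suc (Suc j)) - Y (Suc j) < Y (Suc j))"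
  proof
    assume "Y (Suc (Suc j)) - Y (Suc j) < Y (Suc j)"
    moreover have "Y j < Y (Suc (Suc j)) - Y (Suc j)" using big by simp
    ultimately show False using X_min[OF g a ab] A2 by blast
  qed
  then show ?thesis by simp
qed

definition W :: "nat \<Rightarrow> nat" where "W k = sg k + 1 - Y (Suc k)"

lemma W_eq: "sg (Suc k) + 1 + W k = 2 * (sg k + 1)"
  using X_le[OF g a ab, of k] sig_Suc[OF g a ab, of k] unfolding W_def by simp

lemma W_bad:
  assumes bad: "Y (Suc (Suc (Suc i))) < 2 * Y (Suc (Suc i))"
  shows "2 ^ Suc (Suc i) \<le> g * W (Suc (Suc i))"
proof -
  have "Y (Suc (Suc (Suc i))) \<le> Y (Suc (Suc i)) + Y (Suc i)"
    using step4[of "Suc i"] bad by linarith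
  moreover have "sg (Suc (Suc i)) = sg i + Y (Suc i) + Y (Suc (Suc i))"
    using sig_Suc[OF g a ab, of i] sig_Suc[OF g a ab, of "Suc i"] by simp
  ultimately have "W (Suc (Suc i)) \<ge> sg i + 1" unfolding W_def by simp
  then have "g * W (Suc (Suc i)) \<ge> g * (sg i + 1)" by (rule mult_le_mono2)
  moreover have "2 ^ (i + 2) \<le> g * (sg i + 1)" by (rule mass[OF g a ab])
  ultimately show ?thesis by simp
qed

definition E :: "nat \<Rightarrow> real" where "E k = 2 * real g * (real (sg k) + 1) / 2 ^ k"

lemma E_Suc: "E (Suc k) = E k - real g * real (W k) / 2 ^ k"
proof -
  have h: "real (sg (Suc k) + 1 + W k) = real (2 * (sg k + 1))" by (simp only: W_eq)
  then have key: "real (sg (Suc k)) = 2 * (real (sg k) + 1) - real (W k) - 1" by simp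
  show ?thesis unfolding E_def key by (simp add: field_simps)
qed

lemma E_pos: "E k \<ge> 0" unfolding E_def by (simp add: sum_nonneg)

definition Phi :: "nat \<Rightarrow> nat" where "Phi k = nat \<lfloor>E k\<rfloor>"

lemma Phi_mono: "Phi (Suc k) \<le> Phi k"
proof -
  have "real g * real (W k) / 2 ^ k \<ge> 0" by simp
  then have "E (Suc k) \<le> E k" unfolding E_Suc by linarith
  then show ?thesis unfolding Phi_def by (intro nat_mono floor_mono)
qed

lemma Phi_bad:
  assumes bad: "Y (Suc (Suc (Suc i))) < 2 * Y (Suc (Suc i))"
  shows "Phi (Suc (Suc (Suc i))) < Phi (Suc (Suc i))"
proof -
  let ?k = "Suc (Suc i)"
  have "real (2 ^ ?k) \<le> real (g * W ?k)" using W_bad[OF bad] by (simp only: of_nat_le_iff)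
  then have "2 ^ ?k \<le> real g * real (W ?k)" by simp
  then have "1 \<le> real g * real (W ?k) / 2 ^ ?k" by (simp add: le_divide_eq)
  then have "E (Suc ?k) \<le> E ?k - 1" unfolding E_Suc by linarith
  then have "\<lfloor>E (Suc ?k)\<rfloor> \<le> \<lfloor>E ?k - 1\<rfloor>" by (rule floor_mono)
  then have "\<lfloor>E (Suc ?k)\<rfloor> \<le> \<lfloor>E ?k\<rfloor> - 1" by simp
  moreover have "\<lfloor>E (Suc ?k)\<rfloor> \<ge> 0" using E_pos by simp
  ultimately show ?thesis unfolding Phi_def by linarith
qed

lemma W_add: "W k + Y (Suc k) = sg k + 1"
  using X_le[OF g a ab, of k] unfolding W_def by simp

lemma eventually_double: "\<exists>K. \<forall>k\<ge>K. Y (Suc (Suc k)) = 2 * Y (Suc k)"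
proof -
  have pm: "\<And>n. n \<ge> 2 \<Longrightarrow> Phi (Suc n) \<le> Phi n" by (rule Phi_mono)
  obtain K1 where K1: "K1 \<ge> 2" "\<forall>n\<ge>K1. Phi n = Phi K1"
    using eventually_const[of 2 Phi, OF pm] by blast
  have nobad: "Y (Suc k) \<ge> 2 * Y k" if "k \<ge> K1" for k
  proof (rule ccontr)
    assume nb: "\<not> Y (Suc k) \<ge> 2 * Y k"
    have "k \<ge> 2" using that K1(1) by linarith
    define i where "i = k - 2"
    have i: "k = Suc (Suc i)" using \<open>k \<ge> 2\<close> unfolding i_def by simp
    have nb2: "Y (Suc (Suc (Suc i))) < 2 * Y (Suc (Suc i))" using nb unfolding i by linarith
    have "Phi (Suc k) < Phi k" using Phi_bad[OF nb2] unfolding i .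
    moreover have "Phi (Suc k) = Phi K1" by (rule K1(2)[rule_format]) (use that in simp)
    moreover have "Phi k = Phi K1" by (rule K1(2)[rule_format]) (use that in simp)
    ultimately show False by linarith
  qed
  have Wmono: "W (Suc k) \<le> W k" if "k \<ge> K1" for k
  proof -
    have "Y (Suc (Suc k)) \<ge> 2 * Y (Suc k)" using nobad that by simp
    moreover have "W (Suc k) + Y (Suc (Suc k)) = sg (Suc k) + 1" by (rule W_add)
    moreover have "W k + Y (Suc k) = sg k + 1" by (rule W_add)
    moreover have "sg (Suc k) = sg k + Y (Suc k)" by (rule sig_Suc[OF g a ab])
    ultimately show ?thesis by linarith
  qed
  obtain K2 where K2: "K2 \<ge> K1" "\<forall>n\<ge>K2. W n = W K2"
    using eventually_const[of K1 W, OF Wmono] by blast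
  have "Y (Suc (Suc k)) = 2 * Y (Suc k)" if "k \<ge> K2" for k
  proof -
    have "W (Suc k) = W K2" by (rule K2(2)[rule_format]) (use that in simp)
    moreover have "W k = W K2" by (rule K2(2)[rule_format]) (use that in simp)
    moreover have "W (Suc k) + Y (Suc (Suc k)) = sg (Suc k) + 1" by (rule W_add)
    moreover have "W k + Y (Suc k) = sg k + 1" by (rule W_add)
    moreover have "sg (Suc k) = sg k + Y (Suc k)" by (rule sig_Suc[OF g a ab])
    ultimately show ?thesis by linarith
  qed
  then show ?thesis by blast
qed

end


theorem theorem5:
  fixes g a b :: nat
  assumes "g \<ge> 1" and "0 < a" and "a < b"
  shows "\<exists>n0::nat. \<forall>n\<ge>n0. gamma g a b n = 2 * gamma g a b (n - 1)"
proof -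
  obtain K where K: "\<forall>k\<ge>K. X g a b (Suc (Suc k)) = 2 * X g a b (Suc k)"
    using eventually_double[OF assms] by blast
  show ?thesis
  proof (intro exI allI impI)
    fix n assume n: "n \<ge> K + 4"
    have e1: "gamma g a b n = X g a b (n - 2)" by (rule gamma_X) (use n in simp)
    have e2: "gamma g a b (n - 1) = X g a b (n - 1 - 2)" by (rule gamma_X) (use n in simp)
    have n2: "n - 2 = Suc (Suc (n - 4))" using n by simp
    have n3: "n - 1 - 2 = Suc (n - 4)" using n by simp
    have "X g a b (Suc (Suc (n - 4))) = 2 * X g a b (Suc (n - 4))"
      using K n by simp
    then show "gamma g a b n = 2 * gamma g a b (n - 1)" unfolding e1 e2 n2 n3 .
  qed
qed

end
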